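(* Let $R$ be a ring with identity, ${}_RM$ a finitely generated semisimple left $R$-module and $\varphi:M\to M$ a nilpotent $R$-endomorphism. Then the centralizer $C_\varphi=\{\psi\in\mathrm{Hom}_R(M,M)\mid\psi\circ\varphi=\varphi\circ\psi\}$, as a $Z(R)$-subalgebra of $\mathrm{Hom}_R(M,M)$, is a homomorphic image (as $Z(R)$-algebras) of the opposite algebra of some $Z(R)$-subalgebra of the matrix algebra $M_{m\times m}(R[t])$, where $m=\dim_R(\ker(\varphi))$.
   Context: $Z(R)$ is the centre of $R$, $R[t]$ the polynomial ring over $R$ in a commuting indeterminate $t$, and $\dim_R$ denotes composition length. *)

theory Defs
  imports Main
begin

text \<open>The module M is the whole type 'm; the scalar action is the parameter smul.\<close>

definition left_module :: "('r::ring_1 \<Rightarrow> 'm::ab_group_add \<Rightarrow> 'm) \<Rightarrow> bool" where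
  "left_module smul \<longleftrightarrow>
     (\<forall>r x y. smul r (x + y) = smul r x + smul r y) \<and>
     (\<forall>r s x. smul (r + s) x = smul r x + smul s x) \<and>
     (\<forall>r s x. smul (r * s) x = smul r (smul s x)) \<and>
     (\<forall>x. smul 1 x = x)"

definition submodule :: "('r::ring_1 \<Rightarrow> 'm::ab_group_add \<Rightarrow> 'm) \<Rightarrow> 'm set \<Rightarrow> bool" where
  "submodule smul N \<longleftrightarrow> 0 \<in> N \<and> (\<forall>x\<in>N. \<forall>y\<in>N. x + y \<in> N) \<and> (\<forall>r. \<forall>x\<in>N. smul r x \<in> N)"

definition submodule_span :: "('r::ring_1 \<Rightarrow> 'm::ab_group_add \<Rightarrow> 'm) \<Rightarrow> 'm set \<Rightarrow> 'm set" where
  "submodule_span smul G = \<Inter> {N. submodule smul N \<and> G \<subseteq> N}"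

definition finitely_generated :: "('r::ring_1 \<Rightarrow> 'm::ab_group_add \<Rightarrow> 'm) \<Rightarrow> bool" where
  "finitely_generated smul \<longleftrightarrow> (\<exists>G. finite G \<and> submodule_span smul G = UNIV)"

definition simple_submodule :: "('r::ring_1 \<Rightarrow> 'm::ab_group_add \<Rightarrow> 'm) \<Rightarrow> 'm set \<Rightarrow> bool" where
  "simple_submodule smul N \<longleftrightarrow> submodule smul N \<and> N \<noteq> {0} \<and>
     (\<forall>P. submodule smul P \<and> P \<subseteq> N \<longrightarrow> P = {0} \<or> P = N)"

definition semisimple :: "('r::ring_1 \<Rightarrow> 'm::ab_group_add \<Rightarrow> 'm) \<Rightarrow> bool" where
  "semisimple smul \<longleftrightarrow> submodule_span smul (\<Union> {N. simple_submodule smul N}) = UNIV"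

definition R_linear :: "('r::ring_1 \<Rightarrow> 'm::ab_group_add \<Rightarrow> 'm) \<Rightarrow> ('m \<Rightarrow> 'm) \<Rightarrow> bool" where
  "R_linear smul f \<longleftrightarrow> (\<forall>x y. f (x + y) = f x + f y) \<and> (\<forall>r x. f (smul r x) = smul r (f x))"

definition nilpotent_map :: "('m::zero \<Rightarrow> 'm) \<Rightarrow> bool" where
  "nilpotent_map f \<longleftrightarrow> (\<exists>n. (f ^^ n) = (\<lambda>_. 0))"

definition kernel :: "('m \<Rightarrow> 'm::zero) \<Rightarrow> 'm set" where
  "kernel f = {x. f x = 0}"

definition comp_series :: "('r::ring_1 \<Rightarrow> 'm::ab_group_add \<Rightarrow> 'm) \<Rightarrow> 'm set \<Rightarrow> nat \<Rightarrow> bool" where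
  "comp_series smul N n \<longleftrightarrow> (\<exists>C :: nat \<Rightarrow> 'm set.
     C 0 = {0} \<and> C n = N \<and> (\<forall>i\<le>n. submodule smul (C i)) \<and>
     (\<forall>i<n. C i \<subset> C (Suc i) \<and>
        (\<forall>P. submodule smul P \<and> C i \<subseteq> P \<and> P \<subseteq> C (Suc i) \<longrightarrow> P = C i \<or> P = C (Suc i))))"

definition comp_length :: "('r::ring_1 \<Rightarrow> 'm::ab_group_add \<Rightarrow> 'm) \<Rightarrow> 'm set \<Rightarrow> nat" where
  "comp_length smul N = (LEAST n. comp_series smul N n)"

definition centre :: "'r::ring_1 set" where
  "centre = {z. \<forall>r. z * r = r * z}"

definition centralizer :: "('r::ring_1 \<Rightarrow> 'm::ab_group_add \<Rightarrow> 'm) \<Rightarrow> ('m \<Rightarrow> 'm) \<Rightarrow> ('m \<Rightarrow> 'm) set" where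
  "centralizer smul \<phi> = {\<psi>. R_linear smul \<psi> \<and> \<psi> \<circ> \<phi> = \<phi> \<circ> \<psi>}"

text \<open>A polynomial is a finitely supported coefficient sequence; t commutes with R.\<close>
type_synonym 'r rpoly = "nat \<Rightarrow> 'r"

definition is_rpoly :: "'r::zero rpoly \<Rightarrow> bool" where
  "is_rpoly p \<longleftrightarrow> finite {k. p k \<noteq> 0}"

definition rpoly_mult :: "'r::ring_1 rpoly \<Rightarrow> 'r rpoly \<Rightarrow> 'r rpoly" where
  "rpoly_mult p q = (\<lambda>n. \<Sum>k\<le>n. p k * q (n - k))"

definition rpoly_one :: "'r::ring_1 rpoly" where
  "rpoly_one = (\<lambda>k. if k = 0 then 1 else 0)"

text \<open>m x m matrices over R[t]: entries A i j (i, j < m), zero outside the index range.\<close>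
type_synonym 'r pmat = "nat \<Rightarrow> nat \<Rightarrow> 'r rpoly"

definition is_pmat :: "nat \<Rightarrow> 'r::zero pmat \<Rightarrow> bool" where
  "is_pmat m A \<longleftrightarrow> (\<forall>i j. (i < m \<and> j < m \<longrightarrow> is_rpoly (A i j)) \<and>
                          (\<not> (i < m \<and> j < m) \<longrightarrow> A i j = (\<lambda>_. 0)))"

definition pmat_add :: "'r::ring_1 pmat \<Rightarrow> 'r pmat \<Rightarrow> 'r pmat" where
  "pmat_add A B = (\<lambda>i j k. A i j k + B i j k)"

definition pmat_mult :: "nat \<Rightarrow> 'r::ring_1 pmat \<Rightarrow> 'r pmat \<Rightarrow> 'r pmat" where
  "pmat_mult m A B = (\<lambda>i j. \<lambda>k. \<Sum>l<m. rpoly_mult (A i l) (B l j) k)"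

definition pmat_one :: "nat \<Rightarrow> 'r::ring_1 pmat" where
  "pmat_one m = (\<lambda>i j. if i = j \<and> i < m then rpoly_one else (\<lambda>_. 0))"

definition pmat_scale :: "'r::ring_1 \<Rightarrow> 'r pmat \<Rightarrow> 'r pmat" where
  "pmat_scale z A = (\<lambda>i j k. z * A i j k)"

definition pmat_subalgebra :: "nat \<Rightarrow> 'r::ring_1 pmat set \<Rightarrow> bool" where
  "pmat_subalgebra m S \<longleftrightarrow>
     (\<forall>A\<in>S. is_pmat m A) \<and> pmat_one m \<in> S \<and> (\<lambda>i j k. 0) \<in> S \<and>
     (\<forall>A\<in>S. \<forall>B\<in>S. pmat_add A B \<in> S) \<and>
     (\<forall>A\<in>S. \<forall>B\<in>S. pmat_mult m A B \<in> S) \<and>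
     (\<forall>z\<in>centre. \<forall>A\<in>S. pmat_scale z A \<in> S)"

text \<open>In S^op the product of A and B is B A, so it must go to f A \<circ> f B.\<close>
definition op_alg_epi :: "('r::ring_1 \<Rightarrow> 'm::ab_group_add \<Rightarrow> 'm) \<Rightarrow> nat \<Rightarrow> 'r pmat set
      \<Rightarrow> ('r pmat \<Rightarrow> ('m \<Rightarrow> 'm)) \<Rightarrow> ('m \<Rightarrow> 'm) set \<Rightarrow> bool" where
  "op_alg_epi smul m S f T \<longleftrightarrow>
     f ` S = T \<and>
     (\<forall>A\<in>S. \<forall>B\<in>S. f (pmat_add A B) = (\<lambda>x. f A x + f B x)) \<and>
     (\<forall>A\<in>S. \<forall>B\<in>S. f (pmat_mult m B A) = f A \<circ> f B) \<and>
     f (pmat_one m) = id \<and>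
     (\<forall>z\<in>centre. \<forall>A\<in>S. f (pmat_scale z A) = (\<lambda>x. smul z (f A x)))"

end

theory Submission
  imports Defs
begin

definition msum :: "'m::ab_group_add set \<Rightarrow> 'm set \<Rightarrow> 'm set" where
  "msum A B = {a + b | a b. a \<in> A \<and> b \<in> B}"

locale lmod =
  fixes smul :: "'r::ring_1 \<Rightarrow> 'm::ab_group_add \<Rightarrow> 'm"
  assumes lm: "left_module smul"
begin

abbreviation sub where "sub N \<equiv> submodule smul N"

lemma smul_add: "smul r (x + y) = smul r x + smul r y"
  using lm unfolding left_module_def by blast
lemma add_smul: "smul (r + s) x = smul r x + smul s x"
  using lm unfolding left_module_def by blast
lemma smul_smul: "smul r (smul s x) = smul (r * s) x"
  using lm unfolding left_module_def by metis
lemma one_smul[simp]: "smul 1 x = x"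
  using lm unfolding left_module_def by blast
lemma zero_smul[simp]: "smul 0 x = 0"
  using add_smul[of 0 0 x] by simp
lemma smul_zero[simp]: "smul r 0 = 0"
  using smul_add[of r 0 0] by simp
lemma neg_smul: "smul (- 1) x = - x"
proof -
  have "smul (1 + - 1) x = 0" by simp
  then have "x + smul (-1) x = 0" by (simp only: add_smul one_smul)
  then show ?thesis by (simp add: eq_neg_iff_add_eq_0 add.commute)
qed
lemma smul_sum: "smul r (sum f A) = (\<Sum>a\<in>A. smul r (f a))"
  by (induction A rule: infinite_finite_induct) (auto simp: smul_add)
lemma sum_smul: "smul (sum f A) x = (\<Sum>a\<in>A. smul (f a) x)"
  by (induction A rule: infinite_finite_induct) (auto simp: add_smul)

lemma sub_0: "sub N \<Longrightarrow> 0 \<in> N" unfolding submodule_def by blast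
lemma sub_add: "sub N \<Longrightarrow> x \<in> N \<Longrightarrow> y \<in> N \<Longrightarrow> x + y \<in> N" unfolding submodule_def by blast
lemma sub_smul: "sub N \<Longrightarrow> x \<in> N \<Longrightarrow> smul r x \<in> N" unfolding submodule_def by blast
lemma sub_neg: "sub N \<Longrightarrow> x \<in> N \<Longrightarrow> - x \<in> N"
  using sub_smul[of N x "-1"] by (simp add: neg_smul)
lemma sub_diff: "sub N \<Longrightarrow> x \<in> N \<Longrightarrow> y \<in> N \<Longrightarrow> x - y \<in> N"
  using sub_add[of N x "-y"] sub_neg by simp
lemma sub_sum: "sub N \<Longrightarrow> (\<And>a. a \<in> A \<Longrightarrow> f a \<in> N) \<Longrightarrow> sum f A \<in> N"
  by (induction A rule: infinite_finite_induct) (auto simp: sub_0 sub_add)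

lemma sub_UNIV: "sub UNIV" unfolding submodule_def by simp
lemma sub_zero: "sub {0}" unfolding submodule_def by simp
lemma sub_Int: "sub A \<Longrightarrow> sub B \<Longrightarrow> sub (A \<inter> B)" unfolding submodule_def by blast
lemma sub_msum: "sub A \<Longrightarrow> sub B \<Longrightarrow> sub (msum A B)"
  unfolding submodule_def msum_def
proof (intro conjI ballI allI)
  assume a: "0 \<in> A \<and> (\<forall>x\<in>A. \<forall>y\<in>A. x + y \<in> A) \<and> (\<forall>r. \<forall>x\<in>A. smul r x \<in> A)"
     and b: "0 \<in> B \<and> (\<forall>x\<in>B. \<forall>y\<in>B. x + y \<in> B) \<and> (\<forall>r. \<forall>x\<in>B. smul r x \<in> B)"
  show "0 \<in> {a + b |a b. a \<in> A \<and> b \<in> B}" using a b by force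
  fix x y assume "x \<in> {a + b |a b. a \<in> A \<and> b \<in> B}" "y \<in> {a + b |a b. a \<in> A \<and> b \<in> B}"
  then obtain a1 b1 a2 b2 where "x = a1 + b1" "y = a2 + b2" "a1 \<in> A" "a2 \<in> A" "b1 \<in> B" "b2 \<in> B" by blast
  then show "x + y \<in> {a + b |a b. a \<in> A \<and> b \<in> B}" using a b
    by (intro CollectI exI[of _ "a1+a2"] exI[of _ "b1+b2"]) (simp add: algebra_simps)
next
  fix r x
  assume a: "0 \<in> A \<and> (\<forall>x\<in>A. \<forall>y\<in>A. x + y \<in> A) \<and> (\<forall>r. \<forall>x\<in>A. smul r x \<in> A)"
     and b: "0 \<in> B \<and> (\<forall>x\<in>B. \<forall>y\<in>B. x + y \<in> B) \<and> (\<forall>r. \<forall>x\<in>B. smul r x \<in> B)"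
     and "x \<in> {a + b |a b. a \<in> A \<and> b \<in> B}"
  then obtain a1 b1 where "x = a1 + b1" "a1 \<in> A" "b1 \<in> B" by blast
  then show "smul r x \<in> {a + b |a b. a \<in> A \<and> b \<in> B}" using a b
    by (intro CollectI exI[of _ "smul r a1"] exI[of _ "smul r b1"]) (simp add: smul_add)
qed

lemma msum_le: "sub N \<Longrightarrow> A \<subseteq> N \<Longrightarrow> B \<subseteq> N \<Longrightarrow> msum A B \<subseteq> N"
  unfolding msum_def using sub_add by blast
lemma msum_ge1: "sub B \<Longrightarrow> A \<subseteq> msum A B"
  unfolding msum_def using sub_0 by force
lemma msum_ge2: "sub A \<Longrightarrow> B \<subseteq> msum A B"
  unfolding msum_def using sub_0 by force
lemma msum_mono: "A \<subseteq> A' \<Longrightarrow> B \<subseteq> B' \<Longrightarrow> msum A B \<subseteq> msum A' B'"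
  unfolding msum_def by blast
lemma msum_comm: "msum A B = msum B A"
  unfolding msum_def by (metis (no_types, lifting) add.commute)
lemma msum_zero: "msum A {0} = A"
  unfolding msum_def by auto

lemma modular: assumes "sub A" "sub E" "sub L" "A \<subseteq> E"
  shows "E \<inter> msum A L = msum A (E \<inter> L)"
proof
  show "E \<inter> msum A L \<subseteq> msum A (E \<inter> L)"
  proof
    fix x assume "x \<in> E \<inter> msum A L"
    then obtain a l where x: "x = a + l" "a \<in> A" "l \<in> L" "x \<in> E" unfolding msum_def by blast
    then have "l = x - a" by simp
    then have "l \<in> E" using sub_diff[OF assms(2) x(4)] x(2) assms(4) by blast
    then show "x \<in> msum A (E \<inter> L)" using x unfolding msum_def by blast
  qed
  show "msum A (E \<inter> L) \<subseteq> E \<inter> msum A L"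
    using msum_le[OF assms(2)] assms(4) msum_mono[of A A "E \<inter> L" L] by blast
qed

lemma msum_self: "sub E \<Longrightarrow> F \<subseteq> E \<Longrightarrow> sub F \<Longrightarrow> msum E F = E"
  using msum_le[of E E F] msum_ge1[of F E] by blast

end

context lmod begin

definition chainin :: "'m set \<Rightarrow> 'm set set \<Rightarrow> bool" where
  "chainin N \<C> \<longleftrightarrow> finite \<C> \<and> (\<forall>E\<in>\<C>. sub E \<and> E \<subseteq> N) \<and> (\<forall>E\<in>\<C>. \<forall>F\<in>\<C>. E \<subseteq> F \<or> F \<subseteq> E)"

lemma chain_max: assumes "finite \<C>" "\<C> \<noteq> {}" "\<forall>E\<in>\<C>. \<forall>F\<in>\<C>. E \<subseteq> F \<or> F \<subseteq> (E::'a set)"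
  shows "\<exists>E\<in>\<C>. \<forall>F\<in>\<C>. F \<subseteq> E"
  using assms
proof (induction \<C> rule: finite_ne_induct)
  case (singleton x) then show ?case by auto
next
  case (insert x F)
  then obtain E where "E \<in> F" "\<forall>G\<in>F. G \<subseteq> E" by auto
  moreover have "x \<subseteq> E \<or> E \<subseteq> x" using insert.prems \<open>E \<in> F\<close> by auto
  ultimately show ?case by auto
qed

lemma split_lemma:
  assumes "sub L" "finite \<E>" "\<E> \<noteq> {}" "\<forall>E\<in>\<E>. sub E" "\<forall>E\<in>\<E>. \<forall>F\<in>\<E>. E \<subseteq> F \<or> F \<subseteq> E"
  shows "card \<E> + 1 \<le> card ((\<lambda>E. E \<inter> L) ` \<E>) + card ((\<lambda>E. msum E L) ` \<E>)"
  using assms(2-5)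
proof (induction "card \<E>" arbitrary: \<E>)
  case 0 then show ?case by simp
next
  case (Suc n)
  obtain Em where Em: "Em \<in> \<E>" "\<forall>F\<in>\<E>. F \<subseteq> Em" using chain_max[OF Suc.prems(1,2,4)] by blast
  define \<E>0 where "\<E>0 = \<E> - {Em}"
  have E: "\<E> = insert Em \<E>0" "Em \<notin> \<E>0" using Em unfolding \<E>0_def by auto
  show ?case
  proof (cases "\<E>0 = {}")
    case True then show ?thesis using E by simp
  next
    case False
    have fin: "finite \<E>0" using Suc.prems unfolding \<E>0_def by auto
    have IH: "card \<E>0 + 1 \<le> card ((\<lambda>E. E \<inter> L) ` \<E>0) + card ((\<lambda>E. msum E L) ` \<E>0)"
    proof (rule Suc.hyps(1))
      show "n = card \<E>0" using E fin Suc.hyps(2) by simp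
      show "finite \<E>0" by (rule fin)
      show "\<E>0 \<noteq> {}" by (rule False)
      show "\<forall>E\<in>\<E>0. sub E" using Suc.prems(3) E by blast
      show "\<forall>E\<in>\<E>0. \<forall>F\<in>\<E>0. E \<subseteq> F \<or> F \<subseteq> E" using Suc.prems(4) E by blast
    qed
    have key: "Em \<inter> L \<notin> (\<lambda>E. E \<inter> L) ` \<E>0 \<or> msum Em L \<notin> (\<lambda>E. msum E L) ` \<E>0"
    proof (rule ccontr)
      assume "\<not> ?thesis"
      then obtain E1 E2 where e: "E1 \<in> \<E>0" "E2 \<in> \<E>0" "E1 \<inter> L = Em \<inter> L" "msum E2 L = msum Em L" by auto
      have "E1 \<in> \<E>" "E2 \<in> \<E>" using e(1,2) E by auto
      then have "E1 \<subseteq> E2 \<or> E2 \<subseteq> E1" using Suc.prems(4) by blast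
      then obtain E where EE: "E \<in> \<E>0" "E1 \<subseteq> E" "E2 \<subseteq> E"
        using e(1,2) by blast
      have sE: "sub E" "sub Em" using EE Em Suc.prems(3) unfolding \<E>0_def by auto
      have "E \<subseteq> Em" "E \<noteq> Em" using EE Em E by auto
      have i: "E \<inter> L = Em \<inter> L" using e(3) EE \<open>E \<subseteq> Em\<close> by blast
      have s: "msum E L = msum Em L" using msum_mono[of E2 E L L] msum_mono[of E Em L L] EE e(4) \<open>E \<subseteq> Em\<close> by blast
      have "Em = Em \<inter> msum Em L" using msum_ge1[OF assms(1)] by blast
      also have "\<dots> = Em \<inter> msum E L" using s by simp
      also have "\<dots> = msum E (Em \<inter> L)" using modular[OF sE(1) sE(2) assms(1) \<open>E \<subseteq> Em\<close>] .
      also have "\<dots> = msum E (E \<inter> L)" using i by simp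
      also have "\<dots> = E" using msum_self[OF sE(1), of "E \<inter> L"] sub_Int[OF sE(1) assms(1)] by blast
      finally show False using \<open>E \<noteq> Em\<close> by simp
    qed
    have c1: "card ((\<lambda>E. E \<inter> L) ` \<E>) = card (insert (Em \<inter> L) ((\<lambda>E. E \<inter> L) ` \<E>0))" using E by simp
    have c2: "card ((\<lambda>E. msum E L) ` \<E>) = card (insert (msum Em L) ((\<lambda>E. msum E L) ` \<E>0))" using E by simp
    have "card \<E> = card \<E>0 + 1" using E fin by simp
    moreover have "card (insert (Em \<inter> L) ((\<lambda>E. E \<inter> L) ` \<E>0)) + card (insert (msum Em L) ((\<lambda>E. msum E L) ` \<E>0))
       \<ge> card ((\<lambda>E. E \<inter> L) ` \<E>0) + card ((\<lambda>E. msum E L) ` \<E>0) + 1"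
      using key fin by (auto simp: card_insert_if)
    ultimately show ?thesis using c1 c2 IH by linarith
  qed
qed

lemma step_lemma:
  assumes "sub L" "sub N" "L \<subseteq> N"
    and between: "\<forall>P. sub P \<and> L \<subseteq> P \<and> P \<subseteq> N \<longrightarrow> P = L \<or> P = N"
    and bnd: "\<forall>\<C>. chainin L \<C> \<longrightarrow> card \<C> \<le> a"
    and ch: "chainin N \<C>"
  shows "card \<C> \<le> a + 1"
proof (cases "\<C> = {}")
  case True then show ?thesis by simp
next
  case False
  have sp: "card \<C> + 1 \<le> card ((\<lambda>E. E \<inter> L) ` \<C>) + card ((\<lambda>E. msum E L) ` \<C>)"
    using split_lemma[OF assms(1), of \<C>] ch False unfolding chainin_def by blast
  have "chainin L ((\<lambda>E. E \<inter> L) ` \<C>)"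
    unfolding chainin_def
  proof (intro conjI ballI)
    show "finite ((\<lambda>E. E \<inter> L) ` \<C>)" using ch unfolding chainin_def by simp
  next
    fix X assume "X \<in> (\<lambda>E. E \<inter> L) ` \<C>"
    then obtain E where "E \<in> \<C>" "X = E \<inter> L" by blast
    then show "sub X" "X \<subseteq> L" using ch sub_Int[OF _ assms(1)] unfolding chainin_def by auto
  next
    fix X Y assume "X \<in> (\<lambda>E. E \<inter> L) ` \<C>" "Y \<in> (\<lambda>E. E \<inter> L) ` \<C>"
    then obtain E F where "E \<in> \<C>" "X = E \<inter> L" "F \<in> \<C>" "Y = F \<inter> L" by blast
    then show "X \<subseteq> Y \<or> Y \<subseteq> X" using ch unfolding chainin_def by blast
  qed
  then have a1: "card ((\<lambda>E. E \<inter> L) ` \<C>) \<le> a" using bnd by blast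
  have "(\<lambda>E. msum E L) ` \<C> \<subseteq> {L, N}"
  proof
    fix P assume "P \<in> (\<lambda>E. msum E L) ` \<C>"
    then obtain E where "E \<in> \<C>" "P = msum E L" by blast
    then have "sub E" "E \<subseteq> N" using ch unfolding chainin_def by auto
    then have "sub P" "L \<subseteq> P" "P \<subseteq> N"
      using \<open>P = _\<close> sub_msum[OF _ assms(1)] msum_ge2 msum_le[OF assms(2)] assms(1,3) by auto
    then show "P \<in> {L, N}" using between by blast
  qed
  then have "card ((\<lambda>E. msum E L) ` \<C>) \<le> 2"
  proof -
    have "card {L, N} \<le> 2" by (simp add: card_insert_if)
    then show ?thesis using card_mono[OF _ \<open>_ \<subseteq> {L, N}\<close>] by fastforce
  qed
  then show ?thesis using sp a1 by linarith
qed

lemma chain_zero: "chainin {0} \<C> \<Longrightarrow> card \<C> \<le> 1"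
proof -
  assume c: "chainin {0} \<C>"
  have "\<C> \<subseteq> {{0}}"
  proof
    fix E assume "E \<in> \<C>"
    then have "sub E" "E \<subseteq> {0}" using c unfolding chainin_def by auto
    then have "E = {0}" using sub_0[of E] by auto
    then show "E \<in> {{0}}" by simp
  qed
  then show ?thesis using card_mono[of "{{0}}" \<C>] by simp
qed

lemma comp_series_bound:
  assumes "comp_series smul N n" "chainin N \<C>"
  shows "card \<C> \<le> n + 1"
proof -
  obtain C where C: "C 0 = {0}" "C n = N" "\<forall>i\<le>n. sub (C i)"
    "\<forall>i<n. C i \<subset> C (Suc i) \<and> (\<forall>P. sub P \<and> C i \<subseteq> P \<and> P \<subseteq> C (Suc i) \<longrightarrow> P = C i \<or> P = C (Suc i))"
    using assms(1) unfolding comp_series_def by (elim exE conjE) (intro that, assumption+)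
  have "\<forall>\<C>. chainin (C k) \<C> \<longrightarrow> card \<C> \<le> k + 1" if "k \<le> n" for k
    using that
  proof (induction k)
    case 0 then show ?case using chain_zero C(1) by simp
  next
    case (Suc k)
    have k: "k < n" "k \<le> n" using Suc.prems by auto
    have IH: "\<forall>\<C>. chainin (C k) \<C> \<longrightarrow> card \<C> \<le> k + 1" using Suc.IH k by simp
    have "sub (C k)" "sub (C (Suc k))" using C(3) k Suc.prems by auto
    moreover have "C k \<subseteq> C (Suc k)" "\<forall>P. sub P \<and> C k \<subseteq> P \<and> P \<subseteq> C (Suc k) \<longrightarrow> P = C k \<or> P = C (Suc k)"
      using C(4) k(1) by auto
    ultimately show ?case
      using step_lemma[of "C k" "C (Suc k)" "k+1"] IH by simp
  qed
  then show ?thesis using C(2) assms(2) by blast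
qed

end

fun sumlist :: "'m::ab_group_add set list \<Rightarrow> 'm set" where
  "sumlist [] = {0}"
| "sumlist (S # Ss) = msum S (sumlist Ss)"

context lmod begin

abbreviation span where "span G \<equiv> submodule_span smul G"

lemma span_least: "sub N \<Longrightarrow> G \<subseteq> N \<Longrightarrow> span G \<subseteq> N"
  unfolding submodule_span_def by blast
lemma span_inc: "G \<subseteq> span G"
  unfolding submodule_span_def by blast
lemma span_sub: "sub (span G)"
  unfolding submodule_span_def submodule_def by blast
lemma span_mono: "G \<subseteq> H \<Longrightarrow> span G \<subseteq> span H"
  using span_least[OF span_sub] span_inc by blast

lemma simple_sub: "simple_submodule smul S \<Longrightarrow> sub S"
  unfolding simple_submodule_def by blast

lemma sumlist_sub: "\<forall>S\<in>set Ss. sub S \<Longrightarrow> sub (sumlist Ss)"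
  by (induction Ss) (auto simp: sub_zero sub_msum)

lemma sumlist_app1: "\<forall>S\<in>set (Ss1 @ Ss2). sub S \<Longrightarrow> sumlist Ss2 \<subseteq> sumlist (Ss1 @ Ss2)"
proof (induction Ss1)
  case Nil then show ?case by simp
next
  case (Cons S Ss1)
  then have "sub S" by simp
  then show ?case using Cons msum_ge2[of S "sumlist (Ss1 @ Ss2)"] by auto
qed

lemma sumlist_app2: "\<forall>S\<in>set (Ss1 @ Ss2). sub S \<Longrightarrow> sumlist Ss1 \<subseteq> sumlist (Ss1 @ Ss2)"
proof (induction Ss1)
  case Nil then show ?case using sub_0 sumlist_sub[of Ss2] by simp
next
  case (Cons S Ss1)
  then show ?case using msum_mono[of S S "sumlist Ss1" "sumlist (Ss1 @ Ss2)"] by auto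
qed

lemma semisimple_sumlist:
  assumes ss: "semisimple smul"
  shows "\<exists>Ss. (\<forall>S\<in>set Ss. simple_submodule smul S) \<and> x \<in> sumlist Ss"
proof -
  define U where "U = {x. \<exists>Ss. (\<forall>S\<in>set Ss. simple_submodule smul S) \<and> x \<in> sumlist Ss}"
  have "sub U" unfolding submodule_def
  proof (intro conjI ballI allI)
    show "0 \<in> U" unfolding U_def by (intro CollectI exI[of _ "[]"]) simp
  next
    fix x y assume "x \<in> U" "y \<in> U"
    then obtain Ss1 Ss2 where a: "\<forall>S\<in>set Ss1. simple_submodule smul S" "x \<in> sumlist Ss1"
      "\<forall>S\<in>set Ss2. simple_submodule smul S" "y \<in> sumlist Ss2" unfolding U_def by blast
    have s: "\<forall>S\<in>set (Ss1 @ Ss2). sub S" using a simple_sub by auto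
    have "x + y \<in> sumlist (Ss1 @ Ss2)"
      using sub_add[OF sumlist_sub[OF s]] sumlist_app1[OF s] sumlist_app2[OF s] a(2,4) by blast
    then show "x + y \<in> U" unfolding U_def using a by (intro CollectI exI[of _ "Ss1 @ Ss2"]) auto
  next
    fix r x assume "x \<in> U"
    then obtain Ss where a: "\<forall>S\<in>set Ss. simple_submodule smul S" "x \<in> sumlist Ss" unfolding U_def by blast
    then have "smul r x \<in> sumlist Ss" using sub_smul sumlist_sub simple_sub by blast
    then show "smul r x \<in> U" unfolding U_def using a by blast
  qed
  moreover have "\<Union> {N. simple_submodule smul N} \<subseteq> U"
  proof
    fix x assume "x \<in> \<Union> {N. simple_submodule smul N}"
    then obtain S where "simple_submodule smul S" "x \<in> S" by blast
    then show "x \<in> U" unfolding U_def by (intro CollectI exI[of _ "[S]"]) (simp add: msum_zero)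
  qed
  ultimately have "span (\<Union> {N. simple_submodule smul N}) \<subseteq> U" by (rule span_least)
  then have "U = UNIV" using ss unfolding semisimple_def by blast
  then show ?thesis unfolding U_def by blast
qed

lemma semisimple_fg_sumlist:
  assumes ss: "semisimple smul" and fg: "finitely_generated smul"
  shows "\<exists>Ss. (\<forall>S\<in>set Ss. simple_submodule smul S) \<and> sumlist Ss = UNIV"
proof -
  obtain G where G: "finite G" "span G = UNIV" using fg unfolding finitely_generated_def by blast
  have "\<exists>Ss. (\<forall>S\<in>set Ss. simple_submodule smul S) \<and> H \<subseteq> sumlist Ss" if "finite H" for H
    using that
  proof (induction H rule: finite_induct)
    case empty then show ?case by (intro exI[of _ "[]"]) simp
  next
    case (insert x H)
    then obtain Ss1 where a: "\<forall>S\<in>set Ss1. simple_submodule smul S" "H \<subseteq> sumlist Ss1" by blast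
    obtain Ss2 where b: "\<forall>S\<in>set Ss2. simple_submodule smul S" "x \<in> sumlist Ss2"
      using semisimple_sumlist[OF ss] by blast
    have s: "\<forall>S\<in>set (Ss1 @ Ss2). sub S" using a b simple_sub by auto
    show ?case using a b sumlist_app1[OF s] sumlist_app2[OF s]
      by (intro exI[of _ "Ss1 @ Ss2"]) auto
  qed
  then obtain Ss where a: "\<forall>S\<in>set Ss. simple_submodule smul S" "G \<subseteq> sumlist Ss" using G(1) by blast
  then have "span G \<subseteq> sumlist Ss" using span_least sumlist_sub simple_sub by blast
  then show ?thesis using a G(2) by blast
qed

lemma sumlist_chain_bound:
  assumes "\<forall>S\<in>set Ss. simple_submodule smul S"
  shows "chainin (sumlist Ss) \<C> \<Longrightarrow> card \<C> \<le> length Ss + 1"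
  using assms
proof (induction Ss arbitrary: \<C>)
  case Nil then show ?case using chain_zero by simp
next
  case (Cons S Ss)
  let ?L = "sumlist Ss"
  have sS: "simple_submodule smul S" and sL: "sub ?L" using Cons.prems sumlist_sub simple_sub by auto
  have sSS: "sub S" using sS simple_sub by blast
  have "sub (msum S ?L)" using sub_msum[OF sSS sL] .
  moreover have "?L \<subseteq> msum S ?L" using msum_ge2[OF sSS] .
  moreover have "\<forall>P. sub P \<and> ?L \<subseteq> P \<and> P \<subseteq> msum S ?L \<longrightarrow> P = ?L \<or> P = msum S ?L"
  proof (intro allI impI)
    fix P assume P: "sub P \<and> ?L \<subseteq> P \<and> P \<subseteq> msum S ?L"
    then have eq: "P = msum ?L (P \<inter> S)"
      using modular[of ?L P S] sL sSS msum_comm[of S ?L] by (metis inf.absorb1)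
    have "sub (P \<inter> S)" "P \<inter> S \<subseteq> S" using P sub_Int sSS by auto
    then have "P \<inter> S = {0} \<or> P \<inter> S = S" using sS unfolding simple_submodule_def by blast
    then show "P = ?L \<or> P = msum S ?L" using eq msum_zero msum_comm by metis
  qed
  moreover have "\<forall>\<C>. chainin ?L \<C> \<longrightarrow> card \<C> \<le> length Ss + 1" using Cons by auto
  ultimately show ?case using step_lemma[OF sL, of "msum S ?L" "length Ss + 1" \<C>] Cons.prems(1) by simp
qed

end

locale flmod = lmod smul for smul :: "'r::ring_1 \<Rightarrow> 'm::ab_group_add \<Rightarrow> 'm" +
  fixes Bd :: nat
  assumes bound: "\<And>\<C>. chainin UNIV \<C> \<Longrightarrow> card \<C> \<le> Bd"
begin

definition len :: "'m set \<Rightarrow> nat" where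
  "len N = Max {card \<C> | \<C>. chainin N \<C>}"

lemma chainin_univ: "chainin N \<C> \<Longrightarrow> chainin UNIV \<C>"
  unfolding chainin_def by blast

lemma len_fin: "finite {card \<C> | \<C>. chainin N \<C>}"
proof -
  have "{card \<C> | \<C>. chainin N \<C>} \<subseteq> {..Bd}" using bound chainin_univ by auto
  then show ?thesis using finite_subset by blast
qed

lemma len_ne: "{card \<C> | \<C>. chainin N \<C>} \<noteq> {}"
proof -
  have "chainin N {}" unfolding chainin_def by simp
  then show ?thesis by blast
qed

lemma len_ge: "chainin N \<C> \<Longrightarrow> card \<C> \<le> len N"
  unfolding len_def using Max_ge[OF len_fin] by blast

lemma len_attained: "\<exists>\<C>. chainin N \<C> \<and> card \<C> = len N"
  using Max_in[OF len_fin len_ne, of N] unfolding len_def by auto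

lemma len_le_Bd: "len N \<le> Bd"
  using len_attained[of N] bound chainin_univ by metis

lemma len_strict: assumes "sub Q" "P \<subset> Q" shows "len P < len Q"
proof -
  obtain \<C> where c: "chainin P \<C>" "card \<C> = len P" using len_attained by blast
  have "Q \<notin> \<C>" using c(1) assms(2) unfolding chainin_def by blast
  have "chainin Q (insert Q \<C>)" using c(1) assms unfolding chainin_def by auto
  then have "card (insert Q \<C>) \<le> len Q" by (rule len_ge)
  then show ?thesis using \<open>Q \<notin> \<C>\<close> c c(1) unfolding chainin_def by simp
qed

lemma comp_exists: "sub N \<Longrightarrow> \<exists>n. comp_series smul N n"
proof (induction "len N" arbitrary: N rule: less_induct)
  case less
  show ?case
  proof (cases "N = {0}")
    case True
    then show ?thesis unfolding comp_series_def
      by (intro exI[of _ 0] exI[of _ "\<lambda>_. {0}"]) (simp add: sub_zero)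
  next
    case False
    define P where "P = (\<lambda>X. sub X \<and> X \<subset> N)"
    have P0: "P {0}" unfolding P_def using False sub_zero sub_0[OF less.prems] by auto
    obtain X where X: "P X" "\<forall>Y. P Y \<longrightarrow> len Y \<le> len X"
      using ex_has_greatest_nat[of P "{0}" len "Bd + 1"] P0 len_le_Bd
      by (metis Suc_eq_plus1 le_imp_less_Suc)
    have sX: "sub X" "X \<subset> N" using X(1) unfolding P_def by auto
    have maxl: "\<forall>Y. sub Y \<and> X \<subseteq> Y \<and> Y \<subseteq> N \<longrightarrow> Y = X \<or> Y = N"
    proof (intro allI impI)
      fix Y assume Y: "sub Y \<and> X \<subseteq> Y \<and> Y \<subseteq> N"
      show "Y = X \<or> Y = N"
      proof (rule ccontr)
        assume "\<not> (Y = X \<or> Y = N)"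
        then have "P Y" "X \<subset> Y" using Y unfolding P_def by auto
        then show False using X(2) len_strict[of Y X] Y by fastforce
      qed
    qed
    have "len X < len N" using len_strict[OF less.prems sX(2)] .
    then obtain k where "comp_series smul X k" using less.hyps sX(1) by blast
    then obtain C where C: "C 0 = {0}" "C k = X" "\<forall>i\<le>k. sub (C i)"
      "\<forall>i<k. C i \<subset> C (Suc i) \<and> (\<forall>P. sub P \<and> C i \<subseteq> P \<and> P \<subseteq> C (Suc i) \<longrightarrow> P = C i \<or> P = C (Suc i))"
      unfolding comp_series_def by (elim exE conjE) (intro that, assumption+)
    define C' where "C' = (\<lambda>i. if i \<le> k then C i else N)"
    have a1: "C' 0 = {0}" using C(1) unfolding C'_def by simp
    have a2: "C' (Suc k) = N" unfolding C'_def by simp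
    have a3: "\<forall>i\<le>Suc k. sub (C' i)" using C(3) less.prems unfolding C'_def by auto
    have a4: "\<forall>i<Suc k. C' i \<subset> C' (Suc i) \<and>
        (\<forall>Q. sub Q \<and> C' i \<subseteq> Q \<and> Q \<subseteq> C' (Suc i) \<longrightarrow> Q = C' i \<or> Q = C' (Suc i))"
    proof (intro allI impI)
      fix i assume i: "i < Suc k"
      show "C' i \<subset> C' (Suc i) \<and>
        (\<forall>Q. sub Q \<and> C' i \<subseteq> Q \<and> Q \<subseteq> C' (Suc i) \<longrightarrow> Q = C' i \<or> Q = C' (Suc i))"
      proof (cases "i < k")
        case True then show ?thesis using C(4) unfolding C'_def by auto
      next
        case False then have "i = k" using i by simp
        then show ?thesis using C(2) sX maxl unfolding C'_def by auto
      qed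
    qed
    have "comp_series smul N (Suc k)" unfolding comp_series_def
      using a1 a2 a3 a4 by blast
    then show ?thesis by blast
  qed
qed

end

locale nilmod = flmod smul Bd for smul :: "'r::ring_1 \<Rightarrow> 'm::ab_group_add \<Rightarrow> 'm" and Bd +
  fixes \<phi> :: "'m \<Rightarrow> 'm"
  assumes lin: "R_linear smul \<phi>" and fg: "finitely_generated smul"
begin

lemma phi_add: "\<phi> (x + y) = \<phi> x + \<phi> y" using lin unfolding R_linear_def by blast
lemma phi_smul: "\<phi> (smul r x) = smul r (\<phi> x)" using lin unfolding R_linear_def by blast
lemma phi_0[simp]: "\<phi> 0 = 0" using phi_add[of 0 0] by simp
lemma phi_diff: "\<phi> (x - y) = \<phi> x - \<phi> y" using phi_add[of "x - y" y] by (simp add: algebra_simps)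

abbreviation K where "K \<equiv> kernel \<phi>"

lemma K_sub: "sub K"
  unfolding submodule_def kernel_def by (auto simp: phi_add phi_smul)

lemma img_sub: assumes "sub E" shows "sub (\<phi> ` E)"
  unfolding submodule_def
proof (intro conjI ballI allI)
  have "\<phi> 0 \<in> \<phi> ` E" using sub_0[OF assms] by blast
  then show "0 \<in> \<phi> ` E" by simp
  fix x y assume "x \<in> \<phi> ` E" "y \<in> \<phi> ` E"
  then obtain a b where "a \<in> E" "b \<in> E" "x = \<phi> a" "y = \<phi> b" by blast
  then have "\<phi> (a + b) \<in> \<phi> ` E" using sub_add[OF assms] by blast
  then show "x + y \<in> \<phi> ` E" using \<open>x = _\<close> \<open>y = _\<close> phi_add by simp
next
  fix r x assume "x \<in> \<phi> ` E"
  then obtain a where "a \<in> E" "x = \<phi> a" by blast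
  then have "\<phi> (smul r a) \<in> \<phi> ` E" using sub_smul[OF assms] by blast
  then show "smul r x \<in> \<phi> ` E" using \<open>x = _\<close> phi_smul by simp
qed

lemma msum_K: assumes "sub E" shows "msum E K = \<phi> -` (\<phi> ` E)"
proof
  show "msum E K \<subseteq> \<phi> -` \<phi> ` E"
    unfolding msum_def kernel_def using phi_add by force
  show "\<phi> -` \<phi> ` E \<subseteq> msum E K"
  proof
    fix x assume "x \<in> \<phi> -` \<phi> ` E"
    then obtain e where e: "e \<in> E" "\<phi> x = \<phi> e" by auto
    have "x = e + (x - e)" by simp
    moreover have "x - e \<in> K" unfolding kernel_def using e phi_diff by simp
    ultimately show "x \<in> msum E K" unfolding msum_def using e by blast
  qed
qed

abbreviation m where "m \<equiv> comp_length smul K"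

lemma K_comp: "comp_series smul K m"
  unfolding comp_length_def using comp_exists[OF K_sub] by (rule LeastI_ex)

lemma K_bound: "chainin K \<C> \<Longrightarrow> card \<C> \<le> m + 1"
  using comp_series_bound[OF K_comp] .

abbreviation V where "V xs i \<equiv> msum (span (set (take i xs))) (range \<phi>)"

lemma range_sub: "sub (range \<phi>)" using img_sub[OF sub_UNIV] .

lemma V_sub: "sub (V xs i)" using sub_msum[OF span_sub range_sub] .

lemma V_mono: "i \<le> j \<Longrightarrow> V xs i \<subseteq> V xs j"
  by (rule msum_mono[OF span_mono[OF set_take_subset_set_take] order_refl])

lemma range_V: "range \<phi> \<subseteq> V xs i" using msum_ge2[OF span_sub] .

lemma V0: "V xs 0 = range \<phi>"
proof -
  have "span {} \<subseteq> {0}" using span_least[OF sub_zero] by blast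
  then have "span {} = {0}" using sub_0[OF span_sub] by blast
  then show ?thesis using msum_zero[of "range \<phi>"] msum_comm[of "{0}" "range \<phi>"] by simp
qed

lemma chainin_image:
  assumes "chainin N \<E>" "\<And>E. E \<in> \<E> \<Longrightarrow> sub (f E) \<and> f E \<subseteq> N'"
    "\<And>E F. E \<in> \<E> \<Longrightarrow> F \<in> \<E> \<Longrightarrow> E \<subseteq> F \<Longrightarrow> f E \<subseteq> f F"
  shows "chainin N' (f ` \<E>)"
  unfolding chainin_def
proof (intro conjI)
  show "finite (f ` \<E>)" using assms(1) unfolding chainin_def by simp
  show "\<forall>E\<in>f ` \<E>. sub E \<and> E \<subseteq> N'" using assms(2) by blast
  show "\<forall>E\<in>f ` \<E>. \<forall>F\<in>f ` \<E>. E \<subseteq> F \<or> F \<subseteq> E"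
  proof (intro ballI)
    fix X Y assume "X \<in> f ` \<E>" "Y \<in> f ` \<E>"
    then obtain E F where EF: "E \<in> \<E>" "F \<in> \<E>" "X = f E" "Y = f F" by blast
    then have "E \<subseteq> F \<or> F \<subseteq> E" using assms(1) unfolding chainin_def by blast
    then show "X \<subseteq> Y \<or> Y \<subseteq> X" using assms(3) EF by blast
  qed
qed

lemma gen_bound: "\<exists>xs. length xs \<le> m \<and> msum (span (set xs)) (range \<phi>) = UNIV"
proof -
  define Q where "Q = (\<lambda>xs. msum (span (set xs)) (range \<phi>) = UNIV)"
  obtain G where G: "finite G" "span G = UNIV" using fg unfolding finitely_generated_def by blast
  obtain gl where "set gl = G" using finite_list[OF G(1)] by blast
  then have "Q gl" unfolding Q_def using msum_ge1[OF range_sub, of "span G"] G(2) by auto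
  then have ex: "\<exists>n xs. length xs = n \<and> Q xs" by blast
  define n0 where "n0 = (LEAST n. \<exists>xs. length xs = n \<and> Q xs)"
  obtain xs where xs: "length xs = n0" "Q xs" using LeastI_ex[OF ex] unfolding n0_def by blast
  have minl: "\<And>ys. Q ys \<Longrightarrow> n0 \<le> length ys" unfolding n0_def by (rule Least_le) blast
  have step: "V xs i \<subset> V xs (Suc i)" if i: "i < length xs" for i
  proof (rule ccontr)
    assume nst: "\<not> V xs i \<subset> V xs (Suc i)"
    have le: "V xs i \<subseteq> V xs (Suc i)" using V_mono by simp
    then have eq: "V xs i = V xs (Suc i)" using nst by blast
    have "xs ! i \<in> V xs (Suc i)"
    proof -
      have "xs ! i \<in> set (take (Suc i) xs)" using i by (simp add: take_Suc_conv_app_nth)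
      then show ?thesis using span_inc msum_ge1[OF range_sub] by blast
    qed
    then have xi: "xs ! i \<in> V xs i" using eq by simp
    define ys where "ys = take i xs @ drop (Suc i) xs"
    define W where "W = msum (span (set ys)) (range \<phi>)"
    have sW: "sub W" unfolding W_def using sub_msum[OF span_sub range_sub] .
    have VW: "V xs i \<subseteq> W" unfolding W_def ys_def
      by (rule msum_mono[OF span_mono]) auto
    have ysW: "set ys \<subseteq> W" unfolding W_def using span_inc msum_ge1[OF range_sub] by blast
    have s1: "set xs = set (take i xs) \<union> set (drop i xs)" using set_append[of "take i xs" "drop i xs"] by simp
    have s2: "drop i xs = xs ! i # drop (Suc i) xs" by (rule Cons_nth_drop_Suc[symmetric, OF i])
    have "set xs \<subseteq> W" using ysW xi VW unfolding ys_def s1 s2 by auto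
    then have "span (set xs) \<subseteq> W" using span_least[OF sW] by blast
    moreover have "range \<phi> \<subseteq> W" unfolding W_def by (rule msum_ge2[OF span_sub])
    ultimately have "msum (span (set xs)) (range \<phi>) \<subseteq> W"
      using msum_le[OF sW] by blast
    then have "Q ys" using xs(2) unfolding Q_def W_def by blast
    then have "n0 \<le> length ys" by (rule minl)
    moreover have "length ys < length xs" unfolding ys_def using i by simp
    ultimately show False using xs(1) by simp
  qed
  have strict: "V xs i \<subset> V xs j" if "i < j" "j \<le> length xs" for i j
    using that
  proof (induction j)
    case 0 then show ?case by simp
  next
    case (Suc j)
    show ?case
    proof (cases "i = j")
      case True then show ?thesis using step[of j] Suc.prems by simp
    next
      case False then have "i < j" using Suc.prems by simp
      then have "V xs i \<subset> V xs j" using Suc.IH Suc.prems by simp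
      then show ?thesis using step[of j] Suc.prems by auto
    qed
  qed
  define \<V> where "\<V> = V xs ` {..length xs}"
  have inj: "inj_on (V xs) {..length xs}"
  proof (rule inj_onI)
    fix i j assume "i \<in> {..length xs}" "j \<in> {..length xs}" "V xs i = V xs j"
    then show "i = j" using strict[of i j] strict[of j i] by (cases i j rule: linorder_cases) auto
  qed
  have cV: "card \<V> = length xs + 1" unfolding \<V>_def using card_image[OF inj] by simp
  obtain \<P> where P: "chainin (range \<phi>) \<P>" "card \<P> = len (range \<phi>)" using len_attained by blast
  define \<E> where "\<E> = \<P> \<union> \<V>"
  have Pc: "finite \<P>" "\<And>X. X \<in> \<P> \<Longrightarrow> sub X \<and> X \<subseteq> range \<phi>"
     "\<And>X Y. X \<in> \<P> \<Longrightarrow> Y \<in> \<P> \<Longrightarrow> X \<subseteq> Y \<or> Y \<subseteq> X"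
    using P(1) unfolding chainin_def by auto
  have Vc: "finite \<V>" "\<And>X. X \<in> \<V> \<Longrightarrow> sub X"
    unfolding \<V>_def using V_sub by auto
  have PV: "\<And>X Y. X \<in> \<P> \<Longrightarrow> Y \<in> \<V> \<Longrightarrow> X \<subseteq> Y"
  proof -
    fix X Y assume "X \<in> \<P>" "Y \<in> \<V>"
    then obtain i where "Y = V xs i" "X \<subseteq> range \<phi>" using Pc(2) unfolding \<V>_def by auto
    then show "X \<subseteq> Y" using range_V[of i xs] by blast
  qed
  have VV: "\<And>X Y. X \<in> \<V> \<Longrightarrow> Y \<in> \<V> \<Longrightarrow> X \<subseteq> Y \<or> Y \<subseteq> X"
  proof -
    fix X Y assume "X \<in> \<V>" "Y \<in> \<V>"
    then obtain i j where "X = V xs i" "Y = V xs j" unfolding \<V>_def by auto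
    then show "X \<subseteq> Y \<or> Y \<subseteq> X" using V_mono[of i j xs] V_mono[of j i xs] by (cases "i \<le> j") auto
  qed
  have chE: "chainin UNIV \<E>" unfolding chainin_def
  proof (intro conjI)
    show "finite \<E>" unfolding \<E>_def using Pc(1) Vc(1) by simp
    show "\<forall>E\<in>\<E>. sub E \<and> E \<subseteq> UNIV" unfolding \<E>_def using Pc(2) Vc(2) by blast
    show "\<forall>E\<in>\<E>. \<forall>F\<in>\<E>. E \<subseteq> F \<or> F \<subseteq> E"
    proof (intro ballI)
      fix E F assume "E \<in> \<E>" "F \<in> \<E>"
      then consider "E \<in> \<P>" "F \<in> \<P>" | "E \<in> \<P>" "F \<in> \<V>" | "E \<in> \<V>" "F \<in> \<P>" | "E \<in> \<V>" "F \<in> \<V>"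
        unfolding \<E>_def by blast
      then show "E \<subseteq> F \<or> F \<subseteq> E"
      proof cases
        case 1 then show ?thesis using Pc(3) by blast
      next
        case 2 then show ?thesis using PV by blast
      next
        case 3 then show ?thesis using PV by blast
      next
        case 4 then show ?thesis using VV by blast
      qed
    qed
  qed
  have inter: "\<P> \<inter> \<V> \<subseteq> {V xs 0}"
  proof
    fix X assume X: "X \<in> \<P> \<inter> \<V>"
    then obtain i where i: "i \<le> length xs" "X = V xs i" unfolding \<V>_def by auto
    have "X \<subseteq> range \<phi>" using X Pc(2) by blast
    then have "X \<subseteq> V xs 0" using V0[of xs] by simp
    then have "i = 0" using strict[of 0 i] i by (cases "i = 0") auto
    then show "X \<in> {V xs 0}" using i by simp
  qed
  have fP: "finite \<P>" "finite \<V>" using P(1) unfolding chainin_def \<V>_def by auto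
  have "card \<P> + card \<V> \<le> card \<E> + 1"
  proof -
    have "card \<P> + card \<V> = card \<E> + card (\<P> \<inter> \<V>)" unfolding \<E>_def using card_Un_Int[OF fP] .
    moreover have "card (\<P> \<inter> \<V>) \<le> 1" using card_mono[OF _ inter] by simp
    ultimately show ?thesis by linarith
  qed
  moreover have "card \<E> + 1 \<le> card ((\<lambda>E. E \<inter> K) ` \<E>) + card ((\<lambda>E. msum E K) ` \<E>)"
  proof (rule split_lemma[OF K_sub])
    show "finite \<E>" "\<forall>E\<in>\<E>. sub E" "\<forall>E\<in>\<E>. \<forall>F\<in>\<E>. E \<subseteq> F \<or> F \<subseteq> E" using chE unfolding chainin_def by auto
    show "\<E> \<noteq> {}" unfolding \<E>_def \<V>_def by auto
  qed
  moreover have "card ((\<lambda>E. E \<inter> K) ` \<E>) \<le> m + 1"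
  proof (rule K_bound)
    show "chainin K ((\<lambda>E. E \<inter> K) ` \<E>)"
    proof (rule chainin_image[OF chE])
      fix E assume "E \<in> \<E>"
      then have "sub E" using chE unfolding chainin_def by blast
      then show "sub (E \<inter> K) \<and> E \<inter> K \<subseteq> K" using sub_Int[OF _ K_sub] by blast
    qed blast
  qed
  moreover have "card ((\<lambda>E. msum E K) ` \<E>) \<le> card \<P>"
  proof -
    have "(\<lambda>E. msum E K) ` \<E> = (\<lambda>E. \<phi> -` (\<phi> ` E)) ` \<E>"
    proof (rule image_cong[OF refl])
      fix E assume "E \<in> \<E>"
      then have "sub E" using chE unfolding chainin_def by blast
      then show "msum E K = \<phi> -` (\<phi> ` E)" by (rule msum_K)
    qed
    also have "\<dots> = (\<lambda>X. \<phi> -` X) ` ((\<lambda>E. \<phi> ` E) ` \<E>)" by (simp add: image_image)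
    finally have "card ((\<lambda>E. msum E K) ` \<E>) \<le> card ((\<lambda>E. \<phi> ` E) ` \<E>)"
      using card_image_le[of "(\<lambda>E. \<phi> ` E) ` \<E>" "\<lambda>X. \<phi> -` X"] chE unfolding chainin_def by simp
    moreover have "chainin (range \<phi>) ((\<lambda>E. \<phi> ` E) ` \<E>)"
    proof (rule chainin_image[OF chE])
      fix E assume "E \<in> \<E>"
      then have "sub E" using chE unfolding chainin_def by blast
      then show "sub (\<phi> ` E) \<and> \<phi> ` E \<subseteq> range \<phi>" using img_sub by blast
    qed blast
    ultimately show ?thesis using len_ge[of "range \<phi>" "(\<lambda>E. \<phi> ` E) ` \<E>"] P(2) by linarith
  qed
  ultimately have "length xs \<le> m" using cV by linarith
  then show ?thesis using xs(2) unfolding Q_def by blast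
qed

end

lemma is_rpoly_iff: "is_rpoly p \<longleftrightarrow> (\<exists>d. \<forall>k>d. p k = 0)"
proof
  assume "is_rpoly p"
  then have f: "finite {k. p k \<noteq> 0}" unfolding is_rpoly_def .
  show "\<exists>d. \<forall>k>d. p k = 0"
  proof (intro exI allI impI)
    fix k assume k: "k > Max (insert 0 {k. p k \<noteq> 0})"
    show "p k = 0"
    proof (rule ccontr)
      assume "p k \<noteq> 0"
      then have "k \<le> Max (insert 0 {k. p k \<noteq> 0})" using f by (intro Max_ge) auto
      then show False using k by simp
    qed
  qed
next
  assume "\<exists>d. \<forall>k>d. p k = 0"
  then obtain d where "\<forall>k>d. p k = 0" by blast
  then have "{k. p k \<noteq> 0} \<subseteq> {..d}" by (auto simp: not_less[symmetric])
  then show "is_rpoly p" unfolding is_rpoly_def using finite_subset by blast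
qed

lemma is_rpoly_add: "is_rpoly (p :: 'r::ring_1 rpoly) \<Longrightarrow> is_rpoly q \<Longrightarrow> is_rpoly (\<lambda>k. p k + q k)"
proof -
  assume "is_rpoly p" "is_rpoly q"
  then obtain a b where a: "\<forall>k>a. p k = 0" and b: "\<forall>k>b. q k = 0" unfolding is_rpoly_iff by blast
  have "\<forall>k>max a b. p k + q k = 0"
  proof (intro allI impI)
    fix k assume "k > max a b"
    then have "k > a" "k > b" by auto
    then show "p k + q k = 0" using a b by simp
  qed
  then show ?thesis unfolding is_rpoly_iff by blast
qed

lemma is_rpoly_zero: "is_rpoly (\<lambda>k. 0 :: 'r::ring_1)" unfolding is_rpoly_def by simp

lemma is_rpoly_sum: "(\<And>l. l \<in> A \<Longrightarrow> is_rpoly (F l)) \<Longrightarrow> is_rpoly (\<lambda>k. \<Sum>l\<in>A. (F l k :: 'r::ring_1))"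
proof (induction A rule: infinite_finite_induct)
  case (infinite A) then show ?case by (simp add: is_rpoly_zero)
next
  case empty then show ?case by (simp add: is_rpoly_zero)
next
  case (insert x B)
  then show ?case using is_rpoly_add[of "F x" "\<lambda>k. \<Sum>l\<in>B. F l k"] by simp
qed

lemma is_rpoly_scale: "is_rpoly p \<Longrightarrow> is_rpoly (\<lambda>k. (z::'r::ring_1) * p k)"
proof -
  assume "is_rpoly p"
  then obtain a where a: "\<forall>k>a. p k = 0" unfolding is_rpoly_iff by blast
  then have "\<forall>k>a. z * p k = 0" by simp
  then show ?thesis unfolding is_rpoly_iff by blast
qed

lemma is_rpoly_one: "is_rpoly (rpoly_one :: 'r::ring_1 rpoly)"
  unfolding is_rpoly_iff rpoly_one_def by auto

lemma is_rpoly_mult: assumes "is_rpoly p" "is_rpoly q" shows "is_rpoly (rpoly_mult p q)"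
proof -
  obtain a b where a: "\<forall>k>a. p k = 0" and b: "\<forall>k>b. q k = 0" using assms unfolding is_rpoly_iff by blast
  have "\<forall>n>a+b. rpoly_mult p q n = 0"
  proof (intro allI impI)
    fix n assume n: "n > a + b"
    have "\<forall>k\<le>n. p k * q (n - k) = 0"
    proof (intro allI impI)
      fix k assume "k \<le> n"
      show "p k * q (n - k) = 0"
      proof (cases "k > a")
        case True then show ?thesis using a by simp
      next
        case False then have "n - k > b" using n by linarith
        then show ?thesis using b by simp
      qed
    qed
    then show "rpoly_mult p q n = 0" unfolding rpoly_mult_def by simp
  qed
  then show ?thesis unfolding is_rpoly_iff by blast
qed

locale alg0 = nilmod smul Bd \<phi> for smul :: "'r::ring_1 \<Rightarrow> 'm::ab_group_add \<Rightarrow> 'm" and Bd \<phi> +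
  fixes N :: nat
  assumes nilN: "\<And>x k. N \<le> k \<Longrightarrow> (\<phi> ^^ k) x = 0"
begin

definition ev :: "'r rpoly \<Rightarrow> 'm \<Rightarrow> 'm" where
  "ev p x = (\<Sum>k<N. smul (p k) ((\<phi> ^^ k) x))"

lemma phik_add: "(\<phi> ^^ k) (x + y) = (\<phi> ^^ k) x + (\<phi> ^^ k) y"
  by (induction k) (auto simp: phi_add)
lemma phik_smul: "(\<phi> ^^ k) (smul r x) = smul r ((\<phi> ^^ k) x)"
  by (induction k) (auto simp: phi_smul)
lemma phik_0[simp]: "(\<phi> ^^ k) 0 = 0"
  by (induction k) auto
lemma phik_sum: "(\<phi> ^^ k) (sum f A) = (\<Sum>a\<in>A. (\<phi> ^^ k) (f a))"
  by (induction A rule: infinite_finite_induct) (auto simp: phik_add)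
lemma phik_comp: "(\<phi> ^^ a) ((\<phi> ^^ b) x) = (\<phi> ^^ (a + b)) x"
  by (simp add: funpow_add)

lemma ev_add_p: "ev (\<lambda>k. p k + q k) x = ev p x + ev q x"
  unfolding ev_def by (simp add: add_smul sum.distrib)
lemma ev_zero_p[simp]: "ev (\<lambda>k. 0) x = 0"
  unfolding ev_def by simp
lemma ev_sum_p: "ev (\<lambda>k. \<Sum>l\<in>A. F l k) x = (\<Sum>l\<in>A. ev (F l) x)"
  by (induction A rule: infinite_finite_induct) (auto simp: ev_add_p)
lemma ev_add_x: "ev p (x + y) = ev p x + ev p y"
  unfolding ev_def by (simp add: phik_add smul_add sum.distrib)
lemma ev_zero_x[simp]: "ev p 0 = 0"
  unfolding ev_def by simp
lemma ev_sum_x: "ev p (sum f A) = (\<Sum>a\<in>A. ev p (f a))"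
  by (induction A rule: infinite_finite_induct) (auto simp: ev_add_x)
lemma ev_smul_p: "ev (\<lambda>k. z * p k) x = smul z (ev p x)"
  unfolding ev_def by (simp add: smul_sum smul_smul)
lemma ev_trunc: "ev (\<lambda>k. if k < N then p k else 0) x = ev p x"
  unfolding ev_def by simp

lemma ev_mult: "ev (rpoly_mult p q) x = ev p (ev q x)"
proof -
  define g where "g = (\<lambda>a b. smul (p a * q b) ((\<phi> ^^ (a + b)) x))"
  have "ev p (ev q x) = (\<Sum>a<N. \<Sum>b<N. g a b)"
    unfolding ev_def g_def by (simp add: smul_sum phik_sum phik_smul smul_smul phik_comp)
  also have "\<dots> = (\<Sum>(a,b)\<in>{..<N} \<times> {..<N}. g a b)" by (simp add: sum.cartesian_product)
  also have "\<dots> = (\<Sum>(a,b)\<in>{(a,b). a + b < N}. g a b)"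
  proof (rule sum.mono_neutral_right)
    show "finite ({..<N} \<times> {..<N})" by simp
    show "{(a, b). a + b < N} \<subseteq> {..<N} \<times> {..<N}" by auto
    show "\<forall>i\<in>{..<N} \<times> {..<N} - {(a, b). a + b < N}. (case i of (a, b) \<Rightarrow> g a b) = 0"
    proof
      fix i assume "i \<in> {..<N} \<times> {..<N} - {(a, b). a + b < N}"
      then obtain a b where "i = (a, b)" "N \<le> a + b" by auto
      then show "(case i of (a, b) \<Rightarrow> g a b) = 0" unfolding g_def using nilN by simp
    qed
  qed
  also have "\<dots> = (\<Sum>c<N. \<Sum>a\<le>c. g a (c - a))" by (rule sum.triangle_reindex)
  also have "\<dots> = ev (rpoly_mult p q) x"
    unfolding ev_def rpoly_mult_def g_def by (simp add: sum_smul)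
  finally show ?thesis by simp
qed

lemma ev_one: "ev rpoly_one x = x"
proof (cases N)
  case 0 then show ?thesis unfolding ev_def using nilN[of 0 x] by simp
next
  case (Suc n)
  have "ev rpoly_one x = (\<Sum>k<N. if k = 0 then x else 0)"
    unfolding ev_def rpoly_one_def by (intro sum.cong) auto
  also have "\<dots> = x" using Suc by (simp add: sum.delta)
  finally show ?thesis .
qed

definition tpoly :: "'r rpoly" where "tpoly = (\<lambda>k. if k = 1 then 1 else 0)"

lemma ev_t: "ev tpoly x = \<phi> x"
proof (cases "N \<le> 1")
  case True
  have "ev tpoly x = 0" unfolding ev_def tpoly_def using True
    by (intro sum.neutral) auto
  moreover have "\<phi> x = 0" using nilN[of 1 x] True by simp
  ultimately show ?thesis by simp
next
  case False
  have "ev tpoly x = (\<Sum>k<N. if k = 1 then \<phi> x else 0)"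
    unfolding ev_def tpoly_def by (intro sum.cong) auto
  also have "\<dots> = \<phi> x" using False by (simp add: sum.delta)
  finally show ?thesis .
qed

lemma cent_props: assumes "\<psi> \<in> centralizer smul \<phi>"
  shows "\<And>x y. \<psi> (x + y) = \<psi> x + \<psi> y" "\<And>r x. \<psi> (smul r x) = smul r (\<psi> x)" "\<And>x. \<psi> (\<phi> x) = \<phi> (\<psi> x)"
  using assms unfolding centralizer_def R_linear_def by (auto simp: fun_eq_iff)

lemma cent_ev: assumes "\<psi> \<in> centralizer smul \<phi>" shows "\<psi> (ev p x) = ev p (\<psi> x)"
proof -
  note c = cent_props[OF assms]
  have z: "\<psi> 0 = 0" using c(1)[of 0 0] by simp
  have s: "\<psi> (sum f A) = (\<Sum>a\<in>A. \<psi> (f a))" for f and A :: "nat set"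
    by (induction A rule: infinite_finite_induct) (auto simp: z c(1))
  have k: "\<psi> ((\<phi> ^^ k) y) = (\<phi> ^^ k) (\<psi> y)" for k y
    by (induction k) (auto simp: c(3))
  show ?thesis unfolding ev_def by (simp add: s c(2) k)
qed

end

context alg0 begin

lemma nakayama:
  assumes gen: "msum (span (set xs)) (range \<phi>) = UNIV" and len: "length xs \<le> mm"
  shows "\<forall>y. \<exists>p. y = (\<Sum>j<mm. ev (p j) ((\<lambda>j. if j < length xs then xs ! j else 0) j))"
proof -
  define g where "g = (\<lambda>j. if j < length xs then xs ! j else 0)"
  define NS where "NS = {y. \<exists>p. y = (\<Sum>j<mm. ev (p j) (g j))}"
  have sNS: "sub NS" unfolding submodule_def
  proof (intro conjI ballI allI)
    show "0 \<in> NS" unfolding NS_def by (intro CollectI exI[of _ "\<lambda>j k. 0"]) simp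
  next
    fix x y assume "x \<in> NS" "y \<in> NS"
    then obtain p q where "x = (\<Sum>j<mm. ev (p j) (g j))" "y = (\<Sum>j<mm. ev (q j) (g j))" unfolding NS_def by blast
    then have "x + y = (\<Sum>j<mm. ev (\<lambda>k. p j k + q j k) (g j))" by (simp add: ev_add_p sum.distrib)
    then show "x + y \<in> NS" unfolding NS_def by (intro CollectI exI[of _ "\<lambda>j k. p j k + q j k"])
  next
    fix r x assume "x \<in> NS"
    then obtain p where "x = (\<Sum>j<mm. ev (p j) (g j))" unfolding NS_def by blast
    then have "smul r x = (\<Sum>j<mm. ev (\<lambda>k. r * p j k) (g j))" by (simp add: ev_smul_p smul_sum)
    then show "smul r x \<in> NS" unfolding NS_def by (intro CollectI exI[of _ "\<lambda>j k. r * p j k"])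
  qed
  have phiNS: "\<phi> y \<in> NS" if yN: "y \<in> NS" for y
  proof -
    obtain p where p: "y = (\<Sum>j<mm. ev (p j) (g j))" using yN unfolding NS_def by blast
    have "\<phi> y = ev tpoly y" by (simp add: ev_t)
    also have "\<dots> = (\<Sum>j<mm. ev (rpoly_mult tpoly (p j)) (g j))" unfolding p by (simp add: ev_sum_x ev_mult)
    finally show ?thesis unfolding NS_def by (intro CollectI exI[of _ "\<lambda>j. rpoly_mult tpoly (p j)"])
  qed
  have phikNS: "(\<phi> ^^ k) y \<in> NS" if "y \<in> NS" for y k
    using that by (induction k) (auto simp: phiNS)
  have gNS: "g j \<in> NS" if jm: "j < mm" for j
  proof -
    have "(\<Sum>i<mm. ev ((\<lambda>i. if i = j then rpoly_one else (\<lambda>k. 0)) i) (g i)) = (\<Sum>i<mm. if i = j then g i else 0)"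
      by (intro sum.cong) (auto simp: ev_one)
    also have "\<dots> = g j" using jm by (simp add: sum.delta)
    finally show ?thesis unfolding NS_def by (intro CollectI exI[of _ "\<lambda>i. if i = j then rpoly_one else (\<lambda>k. 0)"]) simp
  qed
  have "set xs \<subseteq> NS"
  proof
    fix x assume "x \<in> set xs"
    then obtain j where "j < length xs" "x = xs ! j" by (auto simp: in_set_conv_nth)
    then show "x \<in> NS" using gNS[of j] len unfolding g_def by simp
  qed
  then have spNS: "span (set xs) \<subseteq> NS" using span_least[OF sNS] by blast
  have "\<forall>z. (\<phi> ^^ (N - i)) z \<in> NS" if "i \<le> N" for i
    using that
  proof (induction i)
    case 0 then show ?case using nilN[of N] sub_0[OF sNS] by simp
  next
    case (Suc i)
    show ?case
    proof
      fix z
      have "z \<in> msum (span (set xs)) (range \<phi>)" using gen by simp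
      then obtain a w where aw: "z = a + \<phi> w" "a \<in> span (set xs)" unfolding msum_def by blast
      have e: "(\<phi> ^^ (N - Suc i)) (\<phi> w) = (\<phi> ^^ (N - i)) w"
        using Suc.prems phik_comp[of "N - Suc i" 1 w] by (simp add: Suc_diff_Suc)
      have "(\<phi> ^^ (N - Suc i)) z = (\<phi> ^^ (N - Suc i)) a + (\<phi> ^^ (N - i)) w"
        unfolding aw(1) phik_add e ..
      moreover have "(\<phi> ^^ (N - Suc i)) a \<in> NS" using phikNS spNS aw(2) by blast
      moreover have "(\<phi> ^^ (N - i)) w \<in> NS" using Suc by simp
      ultimately show "(\<phi> ^^ (N - Suc i)) z \<in> NS" using sub_add[OF sNS] by simp
    qed
  qed
  then have "\<forall>z. (\<phi> ^^ (N - N)) z \<in> NS" using order_refl[of N] by blast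
  then have "\<forall>z. z \<in> NS" by simp
  then show ?thesis unfolding NS_def g_def by blast
qed

end

locale alg1 = alg0 smul Bd \<phi> N for smul :: "'r::ring_1 \<Rightarrow> 'm::ab_group_add \<Rightarrow> 'm" and Bd \<phi> N +
  fixes mm :: nat and g :: "nat \<Rightarrow> 'm"
  assumes gens: "\<And>y. \<exists>p. y = (\<Sum>j<mm. ev (p j) (g j))"
begin

abbreviation CC where "CC \<equiv> centralizer smul \<phi>"

definition pi :: "'r pmat \<Rightarrow> nat \<Rightarrow> 'm" where "pi A i = (\<Sum>j<mm. ev (A i j) (g j))"

definition lifts :: "'r pmat \<Rightarrow> ('m \<Rightarrow> 'm) \<Rightarrow> bool" where
  "lifts A \<psi> \<longleftrightarrow> (\<forall>i<mm. pi A i = \<psi> (g i))"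

lemma cent_sum: assumes "\<psi> \<in> CC" shows "\<psi> (sum f A) = (\<Sum>a\<in>A. \<psi> (f a))"
proof -
  note c = cent_props[OF assms]
  have z: "\<psi> 0 = 0" using c(1)[of 0 0] by simp
  show ?thesis by (induction A rule: infinite_finite_induct) (auto simp: z c(1))
qed

lemma cent_gen: assumes "\<psi> \<in> CC" shows "\<psi> (\<Sum>j<mm. ev (p j) (g j)) = (\<Sum>j<mm. ev (p j) (\<psi> (g j)))"
  by (simp add: cent_sum[OF assms] cent_ev[OF assms])

lemma unique: assumes "\<psi>1 \<in> CC" "\<psi>2 \<in> CC" "\<forall>i<mm. \<psi>1 (g i) = \<psi>2 (g i)" shows "\<psi>1 = \<psi>2"
proof
  fix y
  obtain p where p: "y = (\<Sum>j<mm. ev (p j) (g j))" using gens by blast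
  show "\<psi>1 y = \<psi>2 y" unfolding p cent_gen[OF assms(1)] cent_gen[OF assms(2)] using assms(3) by simp
qed

lemma pi_mult: "pi (pmat_mult mm A B) i = (\<Sum>l<mm. ev (A i l) (pi B l))"
proof -
  have "pi (pmat_mult mm A B) i = (\<Sum>j<mm. \<Sum>l<mm. ev (A i l) (ev (B l j) (g j)))"
    unfolding pi_def pmat_mult_def by (simp add: ev_sum_p ev_mult)
  also have "\<dots> = (\<Sum>l<mm. \<Sum>j<mm. ev (A i l) (ev (B l j) (g j)))" by (rule sum.swap)
  also have "\<dots> = (\<Sum>l<mm. ev (A i l) (pi B l))" unfolding pi_def by (simp add: ev_sum_x)
  finally show ?thesis .
qed

lemma lifts_mult: assumes "lifts A \<psi>A" "lifts B \<psi>B" "\<psi>B \<in> CC"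
  shows "lifts (pmat_mult mm A B) (\<psi>B \<circ> \<psi>A)"
  unfolding lifts_def
proof (intro allI impI)
  fix i assume i: "i < mm"
  have "pi (pmat_mult mm A B) i = (\<Sum>l<mm. ev (A i l) (\<psi>B (g l)))"
    unfolding pi_mult using assms(2) unfolding lifts_def by simp
  also have "\<dots> = \<psi>B (pi A i)" unfolding pi_def cent_gen[OF assms(3)] ..
  also have "\<dots> = (\<psi>B \<circ> \<psi>A) (g i)" using assms(1) i unfolding lifts_def by simp
  finally show "pi (pmat_mult mm A B) i = (\<psi>B \<circ> \<psi>A) (g i)" .
qed

lemma lifts_add: assumes "lifts A \<psi>A" "lifts B \<psi>B"
  shows "lifts (pmat_add A B) (\<lambda>x. \<psi>A x + \<psi>B x)"
  using assms unfolding lifts_def pi_def pmat_add_def by (simp add: ev_add_p sum.distrib)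

lemma lifts_scale: assumes "lifts A \<psi>"
  shows "lifts (pmat_scale z A) (\<lambda>x. smul z (\<psi> x))"
  using assms unfolding lifts_def pi_def pmat_scale_def by (simp add: ev_smul_p smul_sum[symmetric])

lemma lifts_one: "lifts (pmat_one mm) id"
  unfolding lifts_def
proof (intro allI impI)
  fix i assume i: "i < mm"
  have "pi (pmat_one mm) i = (\<Sum>j<mm. if j = i then g j else 0)"
    unfolding pi_def pmat_one_def using i by (intro sum.cong) (auto simp: ev_one)
  also have "\<dots> = g i" using i by (simp add: sum.delta)
  finally show "pi (pmat_one mm) i = id (g i)" by simp
qed

lemma lifts_zero: "lifts (\<lambda>i j k. 0) (\<lambda>x. 0)"
  unfolding lifts_def pi_def by simp

lemma CC_comp: "\<psi>1 \<in> CC \<Longrightarrow> \<psi>2 \<in> CC \<Longrightarrow> \<psi>1 \<circ> \<psi>2 \<in> CC"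
  unfolding centralizer_def R_linear_def by (auto simp: fun_eq_iff)
lemma CC_add: "\<psi>1 \<in> CC \<Longrightarrow> \<psi>2 \<in> CC \<Longrightarrow> (\<lambda>x. \<psi>1 x + \<psi>2 x) \<in> CC"
  unfolding centralizer_def R_linear_def by (auto simp: fun_eq_iff smul_add phi_add algebra_simps)
lemma CC_id: "id \<in> CC"
  unfolding centralizer_def R_linear_def by auto
lemma CC_zero: "(\<lambda>x. 0) \<in> CC"
  unfolding centralizer_def R_linear_def by (auto simp: fun_eq_iff)
lemma CC_scale: assumes "z \<in> centre" "\<psi> \<in> CC" shows "(\<lambda>x. smul z (\<psi> x)) \<in> CC"
proof -
  note c = cent_props[OF assms(2)]
  have zc: "z * r = r * z" for r using assms(1) unfolding centre_def by blast
  show ?thesis unfolding centralizer_def R_linear_def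
    by (auto simp: fun_eq_iff c smul_add smul_smul zc phi_smul)
qed

definition SS where "SS = {A. is_pmat mm A \<and> (\<exists>\<psi>\<in>CC. lifts A \<psi>)}"
definition ff where "ff A = (SOME \<psi>. \<psi> \<in> CC \<and> lifts A \<psi>)"

lemma ff_SS: assumes "A \<in> SS" shows "ff A \<in> CC" "lifts A (ff A)"
proof -
  have "\<exists>\<psi>. \<psi> \<in> CC \<and> lifts A \<psi>" using assms unfolding SS_def by blast
  then have "ff A \<in> CC \<and> lifts A (ff A)" unfolding ff_def by (rule someI_ex)
  then show "ff A \<in> CC" "lifts A (ff A)" by auto
qed

lemma ff_eq: assumes "A \<in> SS" "\<psi> \<in> CC" "lifts A \<psi>" shows "ff A = \<psi>"
  using unique[OF ff_SS(1)[OF assms(1)] assms(2)] ff_SS(2)[OF assms(1)] assms(3)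
  unfolding lifts_def by simp

lemma pmat_add_is: assumes "is_pmat mm A" "is_pmat mm B" shows "is_pmat mm (pmat_add A B)"
  unfolding is_pmat_def
proof (intro allI conjI impI)
  fix i j assume ij: "i < mm \<and> j < mm"
  then have "is_rpoly (A i j)" "is_rpoly (B i j)" using assms unfolding is_pmat_def by auto
  then show "is_rpoly (pmat_add A B i j)" unfolding pmat_add_def by (rule is_rpoly_add)
next
  fix i j assume ij: "\<not> (i < mm \<and> j < mm)"
  then have "A i j = (\<lambda>_. 0)" "B i j = (\<lambda>_. 0)" using assms unfolding is_pmat_def by auto
  then show "pmat_add A B i j = (\<lambda>_. 0)" unfolding pmat_add_def by (simp add: fun_eq_iff)
qed
lemma pmat_scale_is: assumes "is_pmat mm A" shows "is_pmat mm (pmat_scale z A)"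
  unfolding is_pmat_def
proof (intro allI conjI impI)
  fix i j assume ij: "i < mm \<and> j < mm"
  then have "is_rpoly (A i j)" using assms unfolding is_pmat_def by auto
  then show "is_rpoly (pmat_scale z A i j)" unfolding pmat_scale_def by (rule is_rpoly_scale)
next
  fix i j assume ij: "\<not> (i < mm \<and> j < mm)"
  then have "A i j = (\<lambda>_. 0)" using assms unfolding is_pmat_def by auto
  then show "pmat_scale z A i j = (\<lambda>_. 0)" unfolding pmat_scale_def by (simp add: fun_eq_iff)
qed
lemma pmat_one_is: "is_pmat mm (pmat_one mm :: 'r pmat)"
  unfolding is_pmat_def pmat_one_def using is_rpoly_one is_rpoly_zero by auto
lemma pmat_zero_is: "is_pmat mm (\<lambda>i j k. 0 :: 'r)"
  unfolding is_pmat_def using is_rpoly_zero by auto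
lemma pmat_mult_is: assumes "is_pmat mm A" "is_pmat mm B" shows "is_pmat mm (pmat_mult mm A B)"
  unfolding is_pmat_def
proof (intro allI conjI impI)
  fix i j assume ij: "i < mm \<and> j < mm"
  show "is_rpoly (pmat_mult mm A B i j)" unfolding pmat_mult_def
    by (rule is_rpoly_sum, rule is_rpoly_mult) (use assms ij in \<open>auto simp: is_pmat_def\<close>)
next
  fix i j assume ij: "\<not> (i < mm \<and> j < mm)"
  have "\<forall>l<mm. rpoly_mult (A i l) (B l j) = (\<lambda>_. 0)"
  proof (intro allI impI)
    fix l assume "l < mm"
    then have "A i l = (\<lambda>_. 0) \<or> B l j = (\<lambda>_. 0)" using assms ij unfolding is_pmat_def by blast
    then show "rpoly_mult (A i l) (B l j) = (\<lambda>_. 0)" unfolding rpoly_mult_def by auto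
  qed
  then show "pmat_mult mm A B i j = (\<lambda>_. 0)" unfolding pmat_mult_def by (simp add: fun_eq_iff)
qed

lemma surj: assumes "\<psi> \<in> CC" shows "\<exists>A\<in>SS. ff A = \<psi>"
proof -
  have "\<forall>i. \<exists>p. \<psi> (g i) = (\<Sum>j<mm. ev (p j) (g j))" using gens by blast
  then obtain P where P: "\<And>i. \<psi> (g i) = (\<Sum>j<mm. ev (P i j) (g j))" by metis
  define A where "A = (\<lambda>i j k. if i < mm \<and> j < mm \<and> k < N then P i j k else 0)"
  have isA: "is_pmat mm A" unfolding is_pmat_def
  proof (intro allI conjI impI)
    fix i j assume "i < mm \<and> j < mm"
    have "{k. A i j k \<noteq> 0} \<subseteq> {..<N}" unfolding A_def by auto
    then show "is_rpoly (A i j)" unfolding is_rpoly_def using finite_subset by blast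
  next
    fix i j assume "\<not> (i < mm \<and> j < mm)"
    then show "A i j = (\<lambda>_. 0)" unfolding A_def by auto
  qed
  have lA: "lifts A \<psi>" unfolding lifts_def
  proof (intro allI impI)
    fix i assume i: "i < mm"
    have "pi A i = (\<Sum>j<mm. ev (\<lambda>k. if k < N then P i j k else 0) (g j))"
      unfolding pi_def A_def using i by (intro sum.cong) (auto intro!: arg_cong2[where f=ev])
    also have "\<dots> = \<psi> (g i)" unfolding P ev_trunc ..
    finally show "pi A i = \<psi> (g i)" .
  qed
  have "A \<in> SS" unfolding SS_def using isA lA assms by blast
  then show ?thesis using ff_eq[OF _ assms lA] by blast
qed

lemma SS_I: "is_pmat mm A \<Longrightarrow> \<psi> \<in> CC \<Longrightarrow> lifts A \<psi> \<Longrightarrow> A \<in> SS"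
  unfolding SS_def by blast
lemma SS_is: "A \<in> SS \<Longrightarrow> is_pmat mm A"
  unfolding SS_def by blast

lemma main: "\<exists>S f. pmat_subalgebra mm S \<and> op_alg_epi smul mm S f CC"
proof (intro exI conjI)
  have oneS: "pmat_one mm \<in> SS" by (rule SS_I[OF pmat_one_is CC_id lifts_one])
  have multS: "pmat_mult mm A B \<in> SS \<and> ff (pmat_mult mm A B) = ff B \<circ> ff A" if AB: "A \<in> SS" "B \<in> SS" for A B
  proof -
    have l: "lifts (pmat_mult mm A B) (ff B \<circ> ff A)" by (rule lifts_mult[OF ff_SS(2)[OF AB(1)] ff_SS(2)[OF AB(2)] ff_SS(1)[OF AB(2)]])
    have c: "ff B \<circ> ff A \<in> CC" by (rule CC_comp[OF ff_SS(1)[OF AB(2)] ff_SS(1)[OF AB(1)]])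
    have "pmat_mult mm A B \<in> SS" by (rule SS_I[OF pmat_mult_is[OF SS_is[OF AB(1)] SS_is[OF AB(2)]] c l])
    then show ?thesis using ff_eq[OF _ c l] by blast
  qed
  have addS: "pmat_add A B \<in> SS \<and> ff (pmat_add A B) = (\<lambda>x. ff A x + ff B x)" if AB: "A \<in> SS" "B \<in> SS" for A B
  proof -
    have l: "lifts (pmat_add A B) (\<lambda>x. ff A x + ff B x)" by (rule lifts_add[OF ff_SS(2)[OF AB(1)] ff_SS(2)[OF AB(2)]])
    have c: "(\<lambda>x. ff A x + ff B x) \<in> CC" by (rule CC_add[OF ff_SS(1)[OF AB(1)] ff_SS(1)[OF AB(2)]])
    have "pmat_add A B \<in> SS" by (rule SS_I[OF pmat_add_is[OF SS_is[OF AB(1)] SS_is[OF AB(2)]] c l])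
    then show ?thesis using ff_eq[OF _ c l] by blast
  qed
  have scaleS: "pmat_scale z A \<in> SS \<and> ff (pmat_scale z A) = (\<lambda>x. smul z (ff A x))" if zA: "z \<in> centre" "A \<in> SS" for z A
  proof -
    have l: "lifts (pmat_scale z A) (\<lambda>x. smul z (ff A x))" by (rule lifts_scale[OF ff_SS(2)[OF zA(2)]])
    have c: "(\<lambda>x. smul z (ff A x)) \<in> CC" by (rule CC_scale[OF zA(1) ff_SS(1)[OF zA(2)]])
    have "pmat_scale z A \<in> SS" by (rule SS_I[OF pmat_scale_is[OF SS_is[OF zA(2)]] c l])
    then show ?thesis using ff_eq[OF _ c l] by blast
  qed
  have zeroS: "(\<lambda>i j k. 0) \<in> SS" by (rule SS_I[OF pmat_zero_is CC_zero lifts_zero])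
  have isS: "\<forall>A\<in>SS. is_pmat mm A" using SS_is by blast
  have a2: "\<forall>A\<in>SS. \<forall>B\<in>SS. pmat_add A B \<in> SS" using addS by blast
  have a3: "\<forall>A\<in>SS. \<forall>B\<in>SS. pmat_mult mm A B \<in> SS" using multS by blast
  have a4: "\<forall>z\<in>centre. \<forall>A\<in>SS. pmat_scale z A \<in> SS" using scaleS by blast
  show "pmat_subalgebra mm SS" unfolding pmat_subalgebra_def
    by (intro conjI isS oneS zeroS a2 a3 a4)
  have b1: "ff ` SS = CC"
  proof
    show "ff ` SS \<subseteq> CC" using ff_SS(1) by blast
    show "CC \<subseteq> ff ` SS" using surj by blast
  qed
  have b2: "ff (pmat_one mm) = id" using ff_eq[OF oneS CC_id lifts_one] .
  have b3: "\<forall>A\<in>SS. \<forall>B\<in>SS. ff (pmat_add A B) = (\<lambda>x. ff A x + ff B x)" using addS by blast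
  have b4: "\<forall>A\<in>SS. \<forall>B\<in>SS. ff (pmat_mult mm B A) = ff A \<circ> ff B" using multS by blast
  have b5: "\<forall>z\<in>centre. \<forall>A\<in>SS. ff (pmat_scale z A) = (\<lambda>x. smul z (ff A x))" using scaleS by blast
  show "op_alg_epi smul mm SS ff CC" unfolding op_alg_epi_def
    by (intro conjI b1 b2 b3 b4 b5)
qed

end

theorem theorem4p4:
  fixes smul :: "'r::ring_1 \<Rightarrow> 'm::ab_group_add \<Rightarrow> 'm"
    and \<phi> :: "'m \<Rightarrow> 'm"
  assumes "left_module smul"
    and "finitely_generated smul"
    and "semisimple smul"
    and "R_linear smul \<phi>"
    and "nilpotent_map \<phi>"
  shows "\<exists>S f. pmat_subalgebra (comp_length smul (kernel \<phi>)) S \<and>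
               op_alg_epi smul (comp_length smul (kernel \<phi>)) S f (centralizer smul \<phi>)"
proof -
  interpret lmod smul using assms(1) by unfold_locales
  obtain Ss where Ss: "\<forall>S\<in>set Ss. simple_submodule smul S" "sumlist Ss = UNIV"
    using semisimple_fg_sumlist[OF assms(3,2)] by blast
  have bnd: "card \<C> \<le> length Ss + 1" if "chainin UNIV \<C>" for \<C>
    using sumlist_chain_bound[OF Ss(1)] that Ss(2) by simp
  interpret nilmod smul "length Ss + 1" \<phi>
    by unfold_locales (use bnd assms(4,2) in auto)
  obtain n where n: "(\<phi> ^^ n) = (\<lambda>_. 0)" using assms(5) unfolding nilpotent_map_def by blast
  have z: "(\<phi> ^^ j) 0 = 0" for j by (induction j) auto
  have nilN: "(\<phi> ^^ k) x = 0" if "n \<le> k" for x k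
  proof -
    have "(\<phi> ^^ k) x = (\<phi> ^^ (k - n)) ((\<phi> ^^ n) x)" using that funpow_add[of "k - n" n \<phi>] by simp
    then show ?thesis using n z by simp
  qed
  interpret alg0 smul "length Ss + 1" \<phi> n
    by unfold_locales (rule nilN)
  obtain xs where xs: "length xs \<le> m" "msum (span (set xs)) (range \<phi>) = UNIV"
    using gen_bound by blast
  interpret alg1 smul "length Ss + 1" \<phi> n m "\<lambda>j. if j < length xs then xs ! j else 0"
    by unfold_locales (use nakayama[OF xs(2) xs(1)] in blast)
  show ?thesis using main .
qed

end
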